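(* Let $R$ be a Dedekind domain, $I\subseteq R$ an ideal with $R/I$ finite, and $G\in R^{n\times n}$. Let $U,V\in\mathrm{GL}_n(R/I)$ and $d_1,\ldots,d_n\in R$ with $d_{i+1}R+I\subseteq d_iR+I$ for every $i$ be such that $G\equiv U D V\bmod I$ with $D=\mathrm{diag}(d_1,\ldots,d_n)$. Consider a random symmetric $n\times n$ matrix $X\in R^{n\times n}$ whose upper-triangular entries $\{X_{i,j}:i\leq j\}$ have independent and uniformly distributed reductions in $R/I$. Then $$\mathbb{P}\bigl(G^{T}XG\equiv 0\bmod I\bigr)=\prod_{i=1}^n\prod_{j=i}^n\frac{\#\{k\in R/I:\ kd_id_j\equiv 0\bmod I\}}{\mathcal{N}_R(I)}.$$
   Context: The norm of an ideal $I\subseteq R$ is $\mathcal{N}_R(I)=\#(R/I)$. Such $U,V,d_1,\ldots,d_n$ (a Smith normal form of $G$ over $R/I$) always exist since $R/I$ is a principal ideal ring. *)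

theory Defs
  imports "Jordan_Normal_Form.Determinant"
    "HOL-Computational_Algebra.Polynomial_Factorial"
    "HOL-Probability.Probability_Mass_Function"
begin

definition is_ideal :: "'a::comm_ring_1 set \<Rightarrow> bool" where
  "is_ideal I \<longleftrightarrow> 0 \<in> I \<and> (\<forall>x\<in>I. \<forall>y\<in>I. x + y \<in> I) \<and> (\<forall>r. \<forall>x\<in>I. r * x \<in> I)"

definition ideal_generated :: "'a::comm_ring_1 set \<Rightarrow> 'a set" where
  "ideal_generated F = {y. \<exists>c. y = (\<Sum>x\<in>F. c x * x)}"

definition prime_ideal :: "'a::comm_ring_1 set \<Rightarrow> bool" where
  "prime_ideal P \<longleftrightarrow> is_ideal P \<and> P \<noteq> UNIV \<and> (\<forall>a b. a * b \<in> P \<longrightarrow> a \<in> P \<or> b \<in> P)"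

definition maximal_ideal :: "'a::comm_ring_1 set \<Rightarrow> bool" where
  "maximal_ideal M \<longleftrightarrow> is_ideal M \<and> M \<noteq> UNIV \<and>
     (\<forall>J. is_ideal J \<and> M \<subseteq> J \<longrightarrow> J = M \<or> J = UNIV)"

definition noetherian_ring :: "'a::comm_ring_1 itself \<Rightarrow> bool" where
  "noetherian_ring _ \<longleftrightarrow> (\<forall>I::'a set. is_ideal I \<longrightarrow> (\<exists>F. finite F \<and> I = ideal_generated F))"

definition integrally_closed :: "'a::idom itself \<Rightarrow> bool" where
  "integrally_closed _ \<longleftrightarrow>
     (\<forall>x :: 'a fract. (\<exists>p :: 'a poly. lead_coeff p = 1 \<and> degree p \<ge> 1 \<and>
                         poly (map_poly to_fract p) x = 0) \<longrightarrow> x \<in> range to_fract)"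

definition dedekind_domain :: "'a::idom itself \<Rightarrow> bool" where
  "dedekind_domain T \<longleftrightarrow> noetherian_ring T \<and> integrally_closed T \<and>
     (\<forall>P::'a set. prime_ideal P \<and> P \<noteq> {0} \<longrightarrow> maximal_ideal P)"

definition coset_of :: "'a::comm_ring_1 set \<Rightarrow> 'a \<Rightarrow> 'a set" where
  "coset_of I x = {y. x - y \<in> I}"

definition quotient_set :: "'a::comm_ring_1 set \<Rightarrow> 'a set set" where
  "quotient_set I = range (coset_of I)"

definition ideal_norm :: "'a::comm_ring_1 set \<Rightarrow> nat" where
  "ideal_norm I = card (quotient_set I)"

definition principal_plus :: "'a::comm_ring_1 \<Rightarrow> 'a set \<Rightarrow> 'a set" where
  "principal_plus d I = {d * r + x | r x. x \<in> I}"

definition residue_system :: "'a::comm_ring_1 set \<Rightarrow> 'a set \<Rightarrow> bool" where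
  "residue_system I S \<longleftrightarrow> (\<forall>x. \<exists>!s. s \<in> S \<and> x - s \<in> I)"

definition mat_cong :: "'a::comm_ring_1 set \<Rightarrow> 'a mat \<Rightarrow> 'a mat \<Rightarrow> bool" where
  "mat_cong I A B \<longleftrightarrow> dim_row A = dim_row B \<and> dim_col A = dim_col B \<and>
     (\<forall>i<dim_row A. \<forall>j<dim_col A. A $$ (i,j) - B $$ (i,j) \<in> I)"

definition GL_mod :: "nat \<Rightarrow> 'a::comm_ring_1 set \<Rightarrow> 'a mat set" where
  "GL_mod n I = {U \<in> carrier_mat n n. \<exists>W \<in> carrier_mat n n.
      mat_cong I (U * W) (1\<^sub>m n) \<and> mat_cong I (W * U) (1\<^sub>m n)}"

definition diag_of :: "nat \<Rightarrow> (nat \<Rightarrow> 'a::zero) \<Rightarrow> 'a mat" where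
  "diag_of n d = Matrix.mat n n (\<lambda>(i,j). if i = j then d i else 0)"

definition upper_idx :: "nat \<Rightarrow> (nat \<times> nat) set" where
  "upper_idx n = {(i,j). i \<le> j \<and> j < n}"

definition sym_mat_of :: "nat \<Rightarrow> (nat \<times> nat \<Rightarrow> 'a) \<Rightarrow> 'a mat" where
  "sym_mat_of n f = Matrix.mat n n (\<lambda>(i,j). if i \<le> j then f (i,j) else f (j,i))"

end

theory Submission
  imports Defs
begin

lemma id_neg: "is_ideal I \<Longrightarrow> x \<in> I \<Longrightarrow> - x \<in> I"
  unfolding is_ideal_def by (metis mult_minus1)
lemma id_add: "is_ideal I \<Longrightarrow> x \<in> I \<Longrightarrow> y \<in> I \<Longrightarrow> x + y \<in> I"
  unfolding is_ideal_def by blast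
lemma id_diff: "is_ideal I \<Longrightarrow> x \<in> I \<Longrightarrow> y \<in> I \<Longrightarrow> x - y \<in> I"
  using id_add[of I x "-y"] id_neg[of I y] by simp
lemma id_multL: "is_ideal I \<Longrightarrow> x \<in> I \<Longrightarrow> r * x \<in> I"
  unfolding is_ideal_def by blast
lemma id_multR: "is_ideal I \<Longrightarrow> x \<in> I \<Longrightarrow> x * r \<in> I"
  using id_multL[of I x r] by (simp add: mult.commute)
lemma id_zero: "is_ideal I \<Longrightarrow> 0 \<in> I"
  unfolding is_ideal_def by blast
lemma id_sum: "is_ideal I \<Longrightarrow> (\<And>x. x \<in> A \<Longrightarrow> f x \<in> I) \<Longrightarrow> sum f A \<in> I"
  by (induction A rule: infinite_finite_induct) (auto simp: id_zero id_add)
lemma cong_trans: "is_ideal I \<Longrightarrow> x - y \<in> I \<Longrightarrow> y - z \<in> I \<Longrightarrow> x - z \<in> I"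
  using id_add[of I "x - y" "y - z"] by simp
lemma cong_sym: "is_ideal I \<Longrightarrow> x - y \<in> I \<Longrightarrow> y - x \<in> I"
  using id_neg[of I "x - y"] by simp

lemma mat_cong_refl: "is_ideal I \<Longrightarrow> mat_cong I A A"
  by (simp add: mat_cong_def id_zero)
lemma mat_cong_sym: "is_ideal I \<Longrightarrow> mat_cong I A B \<Longrightarrow> mat_cong I B A"
  by (auto simp: mat_cong_def intro: cong_sym)
lemma mat_cong_trans: "is_ideal I \<Longrightarrow> mat_cong I A B \<Longrightarrow> mat_cong I B C \<Longrightarrow> mat_cong I A C"
  unfolding mat_cong_def by (metis cong_trans)
lemma mat_cong_transpose: "mat_cong I A B \<Longrightarrow> mat_cong I (A\<^sup>T) (B\<^sup>T)"
  by (auto simp: mat_cong_def)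

lemma mat_cong_mult:
  assumes I: "is_ideal I" and "mat_cong I A A'" "mat_cong I B B'" "dim_col A = dim_row B"
  shows "mat_cong I (A * B) (A' * B')"
proof -
  have d: "dim_row A' = dim_row A" "dim_col A' = dim_col A" "dim_row B' = dim_row B" "dim_col B' = dim_col B"
    using assms unfolding mat_cong_def by auto
  have ca: "\<And>i l. i < dim_row A \<Longrightarrow> l < dim_col A \<Longrightarrow> A $$ (i,l) - A' $$ (i,l) \<in> I"
   and cb: "\<And>l j. l < dim_row B \<Longrightarrow> j < dim_col B \<Longrightarrow> B $$ (l,j) - B' $$ (l,j) \<in> I"
    using assms unfolding mat_cong_def by auto
  show ?thesis unfolding mat_cong_def
  proof (intro conjI allI impI)
    fix i j assume i: "i < dim_row (A * B)" and j: "j < dim_col (A * B)"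
    have "(A * B) $$ (i,j) - (A' * B') $$ (i,j) =
      (\<Sum>l\<in>{0..<dim_row B}. (A $$ (i,l) - A' $$ (i,l)) * B $$ (l,j) + A' $$ (i,l) * (B $$ (l,j) - B' $$ (l,j)))"
      using i j d assms(4) by (simp add: scalar_prod_def sum_subtractf[symmetric] algebra_simps)
    also have "\<dots> \<in> I"
      using i j assms(4) by (intro id_sum[OF I] id_add[OF I] id_multR[OF I] id_multL[OF I] ca cb) auto
    finally show "(A * B) $$ (i,j) - (A' * B') $$ (i,j) \<in> I" .
  qed (use d in auto)
qed

lemma mat_cong_conj_one:
  assumes I: "is_ideal I" and A: "A \<in> carrier_mat n n" and M: "M \<in> carrier_mat n n"
    and c: "mat_cong I A (1\<^sub>m n)"
  shows "mat_cong I (A\<^sup>T * M * A) M"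
proof -
  have "mat_cong I (A\<^sup>T * M * A) ((1\<^sub>m n)\<^sup>T * M * 1\<^sub>m n)"
    using A M by (intro mat_cong_mult[OF I] mat_cong_transpose c mat_cong_refl[OF I]) auto
  then show ?thesis using M by simp
qed

lemma mat_cong_zero_iff:
  "M \<in> carrier_mat n n \<Longrightarrow> mat_cong I M (0\<^sub>m n n) \<longleftrightarrow> (\<forall>i<n. \<forall>j<n. M $$ (i,j) \<in> I)"
  by (auto simp: mat_cong_def)

lemma if_times0: "(if P then (a::'a::comm_ring_1) else 0) * b = (if P then a * b else 0)"
  "b * (if P then (a::'a::comm_ring_1) else 0) = (if P then b * a else 0)" by auto

lemma diag_mult: fixes Y :: "'a::comm_ring_1 mat" assumes "Y \<in> carrier_mat n n"
  shows "diag_of n d * Y * diag_of n d = Matrix.mat n n (\<lambda>(i,j). d i * Y $$ (i,j) * d j)"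
proof (rule eq_matI)
  fix i j assume i: "i < dim_row (Matrix.mat n n (\<lambda>(i,j). d i * Y $$ (i,j) * d j))"
    and j: "j < dim_col (Matrix.mat n n (\<lambda>(i,j). d i * Y $$ (i,j) * d j))"
  have 1: "(diag_of n d * Y) $$ (i,l) = d i * Y $$ (i,l)" if "l < n" for l
  proof -
    have "(diag_of n d * Y) $$ (i,l) = (\<Sum>k\<in>{0..<n}. (if i = k then d i * Y $$ (k,l) else 0))"
      using i that assms by (auto simp: diag_of_def scalar_prod_def if_times0 intro!: sum.cong)
    also have "\<dots> = d i * Y $$ (i,l)" using i by simp
    finally show ?thesis .
  qed
  have "(diag_of n d * Y * diag_of n d) $$ (i,j) = (\<Sum>k\<in>{0..<n}. (if k = j then d i * Y $$ (i,k) * d j else 0))"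
    using i j assms 1 by (auto simp: diag_of_def scalar_prod_def if_times0 intro!: sum.cong)
  also have "\<dots> = d i * Y $$ (i,j) * d j" using j by simp
  finally show "(diag_of n d * Y * diag_of n d) $$ (i,j) = Matrix.mat n n (\<lambda>(i,j). d i * Y $$ (i,j) * d j) $$ (i,j)"
    using i j by simp
qed (use assms in \<open>auto simp: diag_of_def\<close>)


lemma coset_bij:
  assumes I: "is_ideal I" and S: "residue_system I S"
    and P: "\<And>x y. x - y \<in> I \<Longrightarrow> P x \<Longrightarrow> P y"
  shows "bij_betw (coset_of I) {s\<in>S. P s} {c\<in>quotient_set I. \<exists>k\<in>c. P k}"
proof -
  have uniq: "s = t" if "s \<in> S" "t \<in> S" "s - t \<in> I" for s t
    using S that id_zero[OF I] unfolding residue_system_def by (metis diff_self)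
  have ex: "\<exists>s\<in>S. x - s \<in> I" for x using S unfolding residue_system_def by blast
  have mem: "t \<in> coset_of I t" for t by (simp add: coset_of_def id_zero[OF I])
  have eqc: "coset_of I x = coset_of I s" if "x - s \<in> I" for x s
    unfolding coset_of_def using that cong_trans[OF I] cong_sym[OF I] by blast
  show ?thesis unfolding bij_betw_def
  proof
    show "inj_on (coset_of I) {s \<in> S. P s}"
    proof (rule inj_onI)
      fix s t assume "s \<in> {s \<in> S. P s}" "t \<in> {s \<in> S. P s}" "coset_of I s = coset_of I t"
      then have "t \<in> coset_of I s" using mem[of t] by simp
      then show "s = t" using uniq \<open>s \<in> {s \<in> S. P s}\<close> \<open>t \<in> {s \<in> S. P s}\<close> by (auto simp: coset_of_def)
    qed
    show "coset_of I ` {s \<in> S. P s} = {c \<in> quotient_set I. \<exists>k\<in>c. P k}"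
    proof safe
      fix s assume "s \<in> S" "P s"
      then show "coset_of I s \<in> quotient_set I" "\<exists>k\<in>coset_of I s. P k"
        using mem[of s] by (auto simp: quotient_set_def)
    next
      fix c k assume c: "c \<in> quotient_set I" and k: "k \<in> c" "P k"
      then obtain x where x: "c = coset_of I x" by (auto simp: quotient_set_def)
      obtain s where s: "s \<in> S" "x - s \<in> I" using ex by blast
      have "x - k \<in> I" using k x by (simp add: coset_of_def)
      then have "k - s \<in> I" using s cong_trans[OF I] cong_sym[OF I] by blast
      then have "P s" using P k by blast
      then show "c \<in> coset_of I ` {s \<in> S. P s}" using s eqc x by blast
    qed
  qed
qed

lemma sq_mult: "A \<in> carrier_mat n n \<Longrightarrow> B \<in> carrier_mat n n \<Longrightarrow> A * B \<in> carrier_mat n n"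
  by auto
lemma sq_tr: "A \<in> carrier_mat n n \<Longrightarrow> A\<^sup>T \<in> carrier_mat n n"
  by auto
lemma sq_assoc: fixes A :: "'a::comm_ring_1 mat" shows "A \<in> carrier_mat n n \<Longrightarrow> B \<in> carrier_mat n n \<Longrightarrow> C \<in> carrier_mat n n \<Longrightarrow> A * B * C = A * (B * C)"
  by (rule assoc_mult_mat)
lemma sq_trm: fixes A :: "'a::comm_ring_1 mat" shows "A \<in> carrier_mat n n \<Longrightarrow> B \<in> carrier_mat n n \<Longrightarrow> (A * B)\<^sup>T = B\<^sup>T * A\<^sup>T"
  by (rule transpose_mult)

theorem lemma2p1:
  fixes I :: "'a::idom set" and G U V :: "'a mat" and d :: "nat \<Rightarrow> 'a"
    and n :: nat and S :: "'a set"
  assumes "dedekind_domain TYPE('a)"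
    and "is_ideal I"
    and "finite (quotient_set I)"
    and "G \<in> carrier_mat n n"
    and "U \<in> GL_mod n I" and "V \<in> GL_mod n I"
    and "\<forall>i. i + 1 < n \<longrightarrow> principal_plus (d (i+1)) I \<subseteq> principal_plus (d i) I"
    and "mat_cong I G (U * diag_of n d * V)"
    and "residue_system I S"
  shows "measure_pmf.prob (pmf_of_set (upper_idx n \<rightarrow>\<^sub>E S))
           {f. \<forall>i<n. \<forall>j<n. (transpose_mat G * sym_mat_of n f * G) $$ (i,j) \<in> I}
         = (\<Prod>i<n. \<Prod>j\<in>{i..<n}.
              real (card {c \<in> quotient_set I. \<exists>k\<in>c. k * d i * d j \<in> I})
              / real (ideal_norm I))"
proof -
  note I = assms(2)
  note Sres = assms(9)
  note G = assms(4)
  obtain WU where U: "U \<in> carrier_mat n n" and WU: "WU \<in> carrier_mat n n" "mat_cong I (U * WU) (1\<^sub>m n)"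
    using assms(5) unfolding GL_mod_def by blast
  obtain WV where V: "V \<in> carrier_mat n n" and WV: "WV \<in> carrier_mat n n" "mat_cong I (V * WV) (1\<^sub>m n)"
    using assms(6) unfolding GL_mod_def by blast
  define D where "D = diag_of n d"
  have D: "D \<in> carrier_mat n n" "D\<^sup>T = D" unfolding D_def diag_of_def by (auto intro!: eq_matI)
  define rep where "rep x = (THE s. s \<in> S \<and> x - s \<in> I)" for x
  have rep: "rep x \<in> S \<and> x - rep x \<in> I" for x
    unfolding rep_def by (rule theI') (use Sres in \<open>auto simp: residue_system_def\<close>)
  have uniq: "s = t" if "s \<in> S" "t \<in> S" "s - t \<in> I" for s t
    using Sres that id_zero[OF I] unfolding residue_system_def by (metis diff_self)
  have bijS: "bij_betw (coset_of I) {s\<in>S. True} {c\<in>quotient_set I. \<exists>k\<in>c. True}"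
    by (rule coset_bij[OF I Sres]) auto
  have cardS: "card S = ideal_norm I" and finS: "finite S"
  proof -
    have "{c\<in>quotient_set I. \<exists>k\<in>c. True} = quotient_set I"
      by (auto simp: quotient_set_def coset_of_def) (metis diff_self id_zero[OF I])
    then have b: "bij_betw (coset_of I) S (quotient_set I)" using bijS by simp
    show "card S = ideal_norm I" using bij_betw_same_card[OF b] by (simp add: ideal_norm_def)
    show "finite S" using bij_betw_finite[OF b] assms(3) by simp
  qed
  have Sne: "S \<noteq> {}" using Sres unfolding residue_system_def by blast
  define \<Omega> where "\<Omega> = upper_idx n \<rightarrow>\<^sub>E S"
  have finU: "finite (upper_idx n)"
    by (rule finite_subset[of _ "{..<n} \<times> {..<n}"]) (auto simp: upper_idx_def)
  have fin\<Omega>: "finite \<Omega>" unfolding \<Omega>_def using finU finS by (simp add: finite_PiE)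
  have ne\<Omega>: "\<Omega> \<noteq> {}" unfolding \<Omega>_def using Sne by (simp add: PiE_eq_empty_iff)
  define X where "X f = sym_mat_of n f" for f :: "nat \<times> nat \<Rightarrow> 'a"
  have X: "X f \<in> carrier_mat n n" "(X f)\<^sup>T = X f" for f
    unfolding X_def sym_mat_of_def by (auto intro!: eq_matI)
  define Y where "Y f = U\<^sup>T * X f * U" for f
  have Y: "Y f \<in> carrier_mat n n" for f unfolding Y_def using U X by auto
  have Ysym: "Y f $$ (i,j) = Y f $$ (j,i)" if "i < n" "j < n" for f i j
  proof -
    have a: "U\<^sup>T * X f \<in> carrier_mat n n" using U X by auto
    have "(Y f)\<^sup>T = U\<^sup>T * (U\<^sup>T * X f)\<^sup>T" unfolding Y_def using transpose_mult[OF a U] by simp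
    also have "(U\<^sup>T * X f)\<^sup>T = X f * U" using transpose_mult[of "U\<^sup>T" n n "X f" n] U X[of f] by simp
    also have "U\<^sup>T * (X f * U) = Y f" unfolding Y_def using U X[of f] by (simp add: assoc_mult_mat[of _ n n])
    finally have "(Y f)\<^sup>T = Y f" .
    then show ?thesis using that Y[of f] by (metis carrier_matD index_transpose_mat(1))
  qed
  define E where "E = {f. \<forall>i<n. \<forall>j<n. (transpose_mat G * sym_mat_of n f * G) $$ (i,j) \<in> I}"
  have K: "D * Y f * D \<in> carrier_mat n n" for f using D Y by auto
  have Kent: "(\<forall>i<n. \<forall>j<n. (D * Y f * D) $$ (i,j) \<in> I) \<longleftrightarrow> (\<forall>i<n. \<forall>j<n. d i * Y f $$ (i,j) * d j \<in> I)" for f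
    unfolding D_def diag_mult[OF Y] by simp
  have Echar: "f \<in> E \<longleftrightarrow> (\<forall>i<n. \<forall>j<n. d i * Y f $$ (i,j) * d j \<in> I)" for f
  proof -
    define H where "H = U * D * V"
    have H: "H \<in> carrier_mat n n" unfolding H_def using U D V by auto
    have eq: "H\<^sup>T * X f * H = V\<^sup>T * (D * Y f * D) * V"
      unfolding H_def Y_def using U V D X[of f]
      by (simp add: sq_mult sq_tr sq_trm sq_assoc)
    have c1: "mat_cong I (G\<^sup>T * X f * G) (V\<^sup>T * (D * Y f * D) * V)"
      unfolding eq[symmetric]
      using assms(8) G H X[of f] unfolding H_def[symmetric] D_def[symmetric]
      by (intro mat_cong_mult[OF I] mat_cong_transpose mat_cong_refl[OF I]) auto
    have M: "G\<^sup>T * X f * G \<in> carrier_mat n n" using G X by auto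
    have "f \<in> E \<longleftrightarrow> mat_cong I (G\<^sup>T * X f * G) (0\<^sub>m n n)"
      using mat_cong_zero_iff[OF M, of I] unfolding E_def X_def by simp
    also have "\<dots> \<longleftrightarrow> mat_cong I (D * Y f * D) (0\<^sub>m n n)"
    proof
      assume a: "mat_cong I (G\<^sup>T * X f * G) (0\<^sub>m n n)"
      have "mat_cong I (V\<^sup>T * (D * Y f * D) * V) (0\<^sub>m n n)"
        using mat_cong_trans[OF I mat_cong_sym[OF I c1] a] .
      then have "mat_cong I (WV\<^sup>T * (V\<^sup>T * (D * Y f * D) * V) * WV) (WV\<^sup>T * 0\<^sub>m n n * WV)"
        using WV V K[of f] by (intro mat_cong_mult[OF I] mat_cong_refl[OF I]) auto
      also have "WV\<^sup>T * (V\<^sup>T * (D * Y f * D) * V) * WV = (V * WV)\<^sup>T * (D * Y f * D) * (V * WV)"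
        using WV V K[of f] by (simp add: sq_mult sq_tr sq_trm sq_assoc)
      also have "WV\<^sup>T * 0\<^sub>m n n * WV = 0\<^sub>m n n" using WV by simp
      finally have "mat_cong I ((V * WV)\<^sup>T * (D * Y f * D) * (V * WV)) (0\<^sub>m n n)" .
      moreover have "mat_cong I ((V * WV)\<^sup>T * (D * Y f * D) * (V * WV)) (D * Y f * D)"
        using WV V K[of f] by (intro mat_cong_conj_one[OF I]) auto
      ultimately show "mat_cong I (D * Y f * D) (0\<^sub>m n n)"
        using mat_cong_trans[OF I mat_cong_sym[OF I]] by blast
    next
      assume a: "mat_cong I (D * Y f * D) (0\<^sub>m n n)"
      have "mat_cong I (V\<^sup>T * (D * Y f * D) * V) (V\<^sup>T * 0\<^sub>m n n * V)"
        using a V K[of f] by (intro mat_cong_mult[OF I] mat_cong_refl[OF I]) auto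
      also have "V\<^sup>T * 0\<^sub>m n n * V = 0\<^sub>m n n" using V by simp
      finally show "mat_cong I (G\<^sup>T * X f * G) (0\<^sub>m n n)"
        using mat_cong_trans[OF I c1] by blast
    qed
    also have "\<dots> \<longleftrightarrow> (\<forall>i<n. \<forall>j<n. d i * Y f $$ (i,j) * d j \<in> I)"
      using mat_cong_zero_iff[OF K] Kent by blast
    finally show ?thesis .
  qed
  define phi where "phi f = restrict (\<lambda>p. rep (Y f $$ p)) (upper_idx n)" for f
  define B where "B p = {s\<in>S. s * d (fst p) * d (snd p) \<in> I}" for p
  define E' where "E' = PiE (upper_idx n) B"
  have phi\<Omega>: "phi f \<in> \<Omega>" for f unfolding phi_def \<Omega>_def using rep by auto
  have upper_sym: "(\<forall>i<n. \<forall>j<n. P i j) \<longleftrightarrow> (\<forall>p\<in>upper_idx n. P (fst p) (snd p))"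
    if "\<And>i j. i < n \<Longrightarrow> j < n \<Longrightarrow> P i j = P j i" for P
  proof
    assume "\<forall>p\<in>upper_idx n. P (fst p) (snd p)"
    then have h: "P i j" if "i \<le> j" "j < n" for i j using that by (auto simp: upper_idx_def)
    show "\<forall>i<n. \<forall>j<n. P i j"
    proof (intro allI impI)
      fix i j assume "i < n" "j < n"
      then show "P i j" using h[of i j] h[of j i] that[of i j] by (cases "i \<le> j") auto
    qed
  qed (auto simp: upper_idx_def)
  have EE': "f \<in> E \<longleftrightarrow> phi f \<in> E'" if f: "f \<in> \<Omega>" for f
  proof -
    have "f \<in> E \<longleftrightarrow> (\<forall>p\<in>upper_idx n. d (fst p) * Y f $$ p * d (snd p) \<in> I)"
      unfolding Echar
      by (subst upper_sym) (auto simp: Ysym mult.commute mult.left_commute)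
    also have "\<dots> \<longleftrightarrow> (\<forall>p\<in>upper_idx n. rep (Y f $$ p) * d (fst p) * d (snd p) \<in> I)"
    proof (intro ball_cong refl)
      fix p
      have "Y f $$ p - rep (Y f $$ p) \<in> I" using rep by blast
      then have "d (fst p) * Y f $$ p * d (snd p) - rep (Y f $$ p) * d (fst p) * d (snd p) \<in> I"
        using id_multL[OF I, of _ "d (fst p) * d (snd p)"]
        by (metis (no_types, lifting) left_diff_distrib mult.commute mult.left_commute)
      then show "(d (fst p) * Y f $$ p * d (snd p) \<in> I) = (rep (Y f $$ p) * d (fst p) * d (snd p) \<in> I)"
        by (metis cong_sym[OF I] diff_add_cancel id_add[OF I] add_diff_cancel_left')
    qed
    also have "\<dots> \<longleftrightarrow> phi f \<in> E'"
      unfolding E'_def B_def phi_def using rep by auto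
    finally show ?thesis .
  qed
  have inj: "inj_on phi \<Omega>"
  proof (rule inj_onI)
    fix f g assume f: "f \<in> \<Omega>" and g: "g \<in> \<Omega>" and eq: "phi f = phi g"
    have c: "Y f $$ p - Y g $$ p \<in> I" if "p \<in> upper_idx n" for p
    proof -
      have "rep (Y f $$ p) = rep (Y g $$ p)" using fun_cong[OF eq, of p] that by (simp add: phi_def)
      then show ?thesis using rep[of "Y f $$ p"] rep[of "Y g $$ p"] cong_trans[OF I] cong_sym[OF I] by metis
    qed
    have "\<forall>i<n. \<forall>j<n. Y f $$ (i,j) - Y g $$ (i,j) \<in> I"
      by (subst upper_sym) (use c Ysym in auto)
    then have cY: "mat_cong I (Y f) (Y g)" using Y[of f] Y[of g] by (auto simp: mat_cong_def)
    have cX: "mat_cong I (X h) (WU\<^sup>T * Y h * WU)" for h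
    proof -
      have "WU\<^sup>T * Y h * WU = (U * WU)\<^sup>T * X h * (U * WU)"
        unfolding Y_def using WU U X[of h] by (simp add: sq_mult sq_tr sq_trm sq_assoc)
      then show ?thesis using mat_cong_conj_one[OF I _ X(1) WU(2)] WU U mat_cong_sym[OF I] by auto
    qed
    have "mat_cong I (WU\<^sup>T * Y f * WU) (WU\<^sup>T * Y g * WU)"
      using WU Y[of f] cY by (intro mat_cong_mult[OF I] mat_cong_refl[OF I]) auto
    then have "mat_cong I (X f) (X g)"
      using cX[of f] cX[of g] mat_cong_trans[OF I] mat_cong_sym[OF I] by meson
    then have "f p = g p" if pu: "p \<in> upper_idx n" for p
    proof -
      obtain i j where p: "p = (i,j)" "i \<le> j" "j < n" using pu by (auto simp: upper_idx_def)
      have ii: "i < n" using p by simp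
      have "X f $$ (i,j) - X g $$ (i,j) \<in> I" using \<open>mat_cong I (X f) (X g)\<close> p ii X[of f]
        unfolding mat_cong_def by auto
      then have "f p - g p \<in> I" using p ii by (simp add: X_def sym_mat_of_def)
      then show ?thesis using uniq f g pu by (auto simp: \<Omega>_def)
    qed
    then show "f = g" using f g unfolding \<Omega>_def by (metis PiE_ext)
  qed
  have img: "phi ` \<Omega> = \<Omega>"
    using inj phi\<Omega> fin\<Omega> by (metis card_image card_subset_eq image_subsetI)
  have "\<Omega> \<inter> E' = E'" unfolding E'_def \<Omega>_def B_def by auto
  have cardE: "card (\<Omega> \<inter> E) = card E'"
  proof -
    have "phi ` (\<Omega> \<inter> E) = \<Omega> \<inter> E'"
    proof safe
      fix f assume "f \<in> \<Omega>" "f \<in> E" then show "phi f \<in> \<Omega>" "phi f \<in> E'" using phi\<Omega> EE' by auto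
    next
      fix g assume "g \<in> \<Omega>" "g \<in> E'"
      then obtain f where "f \<in> \<Omega>" "g = phi f" using img by blast
      then show "g \<in> phi ` (\<Omega> \<inter> E)" using EE' \<open>g \<in> E'\<close> by auto
    qed
    then show ?thesis using card_image[OF inj_on_subset[OF inj, of "\<Omega> \<inter> E"]] \<open>\<Omega> \<inter> E' = E'\<close> by auto
  qed
  have cardB: "card (B (i,j)) = card {c \<in> quotient_set I. \<exists>k\<in>c. k * d i * d j \<in> I}" for i j
  proof -
    have "bij_betw (coset_of I) {s\<in>S. s * d i * d j \<in> I} {c \<in> quotient_set I. \<exists>k\<in>c. k * d i * d j \<in> I}"
    proof (rule coset_bij[OF I Sres])
      fix x y assume "x - y \<in> I" "x * d i * d j \<in> I"
      moreover have "x * d i * d j - y * d i * d j \<in> I"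
        using id_multR[OF I \<open>x - y \<in> I\<close>, of "d i * d j"] by (simp add: algebra_simps)
      ultimately show "y * d i * d j \<in> I" by (metis cong_sym[OF I] diff_add_cancel id_add[OF I] add_diff_cancel_left')
    qed
    then show ?thesis unfolding B_def by (simp add: bij_betw_same_card)
  qed
  have Usig: "upper_idx n = Sigma {..<n} (\<lambda>i. {i..<n})" by (auto simp: upper_idx_def)
  have "measure_pmf.prob (pmf_of_set \<Omega>) E = real (card (\<Omega> \<inter> E)) / real (card \<Omega>)"
    by (rule measure_pmf_of_set[OF ne\<Omega> fin\<Omega>])
  also have "\<dots> = real (\<Prod>p\<in>upper_idx n. card (B p)) / real (\<Prod>p\<in>upper_idx n. card S)"
    using cardE unfolding E'_def \<Omega>_def card_PiE[OF finU] by simp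
  also have "\<dots> = (\<Prod>p\<in>upper_idx n. real (card (B p)) / real (ideal_norm I))"
    by (simp add: prod_dividef cardS)
  also have "\<dots> = (\<Prod>i<n. \<Prod>j\<in>{i..<n}.
              real (card {c \<in> quotient_set I. \<exists>k\<in>c. k * d i * d j \<in> I}) / real (ideal_norm I))"
    unfolding Usig prod.Sigma[of "{..<n}" "\<lambda>i. {i..<n}" "\<lambda>i j. real (card (B (i,j))) / real (ideal_norm I)", symmetric, simplified]
    by (simp add: cardB)
  finally show ?thesis unfolding \<Omega>_def E_def .
qed
end
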